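(* Let $n\ge 2$ and $0=x_0<x_1<\dots<x_n<x_{n+1}=1$. Let $\hat F_n(x)=\frac1n\#\{i\in\{1,\dots,n\}: x_i\le x\}$ for $x\in[0,1]$, so $\hat F_n(x)=\frac{i-1}{n}$ for $x\in[x_{i-1},x_i)$, $i=1,\dots,n+1$, and $\hat F_n(1)=1$. Set $p_1=0$, $p_i=\frac1n$ for $i=2,\dots,n+1$, $\delta_1=\frac{n-1}{n^2}$, $\delta_i=-\frac1{n^2}$ for $i=2,\dots,n$, and define for $u\in\mathcal{F}([0,1])$ $$T_pu(x)=p_iu(x)+\sum_{j=1}^{i-1}p_j+\sum_{j=1}^{i-1}\delta_j\quad\text{for }x\in[x_{i-1},x_i),\ i=1,\dots,n+1,$$ with the last interval taken as $[x_n,1]$. Then $T_p$ maps $\mathcal{F}([0,1])$ into itself, $T_p\hat F_n=\hat F_n$, and for every $u\in\mathcal{F}([0,1])$, $d_{sup}(T_p^{s}u,\hat F_n)\to 0$ as $s\to\infty$, where $T_p^s$ denotes the $s$-fold iterate.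
   Context: $\mathcal{F}([0,1])$ denotes the set of distribution functions on $[0,1]$, i.e. functions $F:[0,1]\to[0,1]$ that are non-decreasing, right-continuous, with $F(0)=0$ and $F(1)=1$; $d_{sup}(F,G)=\sup_{x\in[0,1]}|F(x)-G(x)|$. *)

theory Defs
  imports "HOL-Analysis.Analysis"
begin

text \<open>Distribution functions on [0,1]: represented as real functions; only values on [0,1] matter.\<close>
definition distfuns :: "(real \<Rightarrow> real) set" where
  "distfuns = {F. mono_on {0..1} F \<and> (\<forall>x\<in>{0..<1}. continuous (at_right x) F)
                 \<and> (\<forall>x\<in>{0..1}. F x \<in> {0..1}) \<and> F 0 = 0 \<and> F 1 = 1}"

definition dsup :: "(real \<Rightarrow> real) \<Rightarrow> (real \<Rightarrow> real) \<Rightarrow> real" where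
  "dsup F G = (SUP x\<in>{0..1}. \<bar>F x - G x\<bar>)"

definition Fhat :: "nat \<Rightarrow> (nat \<Rightarrow> real) \<Rightarrow> real \<Rightarrow> real" where
  "Fhat n xs x = real (card {i\<in>{1..n}. xs i \<le> x}) / real n"

definition pw :: "nat \<Rightarrow> nat \<Rightarrow> real" where
  "pw n i = (if i = 1 then 0 else 1 / real n)"

definition dl :: "nat \<Rightarrow> nat \<Rightarrow> real" where
  "dl n i = (if i = 1 then (real n - 1) / (real n)^2 else - 1 / (real n)^2)"

definition intv :: "nat \<Rightarrow> (nat \<Rightarrow> real) \<Rightarrow> nat \<Rightarrow> real set" where
  "intv n xs i = (if i = n + 1 then {xs n..1} else {xs (i - 1)..<xs i})"

definition Tp :: "nat \<Rightarrow> (nat \<Rightarrow> real) \<Rightarrow> (real \<Rightarrow> real) \<Rightarrow> real \<Rightarrow> real" where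
  "Tp n xs u x =
     (if x \<in> {0..1} then
        (let i = (THE i. i \<in> {1..n+1} \<and> x \<in> intv n xs i)
         in pw n i * u x + (\<Sum>j=1..<i. pw n j) + (\<Sum>j=1..<i. dl n j))
      else 0)"

end

theory Submission
  imports Defs
begin

locale setupT =
  fixes n :: nat and xs :: "nat \<Rightarrow> real"
  assumes n2: "n \<ge> 2"
    and x0: "xs 0 = 0" and x1: "xs (n + 1) = 1"
    and sm: "strict_mono_on {0..n+1} xs"
begin

definition S :: "real \<Rightarrow> nat set" where "S x = {j\<in>{1..n}. xs j \<le> x}"
definition k :: "real \<Rightarrow> nat" where "k x = card (S x)"
definition g :: "nat \<Rightarrow> real \<Rightarrow> real" where
  "g m t = (if m = 0 then 0 else t / n + (real m - 1) / n + (real n - real m) / (real n)^2)"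

lemma xs_less: "a < b \<Longrightarrow> b \<le> n + 1 \<Longrightarrow> xs a < xs b"
  using sm by (auto simp: monotone_on_def)

lemma xs_le: "a \<le> b \<Longrightarrow> b \<le> n + 1 \<Longrightarrow> xs a \<le> xs b"
  using xs_less[of a b] by (cases "a = b") auto

lemma S_intv:
  assumes "i \<in> {1..n+1}" "x \<in> intv n xs i"
  shows "S x = {1..<i}"
proof -
  have A: "xs (i - 1) \<le> x" and B: "i \<le> n \<Longrightarrow> x < xs i"
    using assms by (auto simp: intv_def split: if_splits)
  show ?thesis
  proof (intro set_eqI iffI)
    fix j assume "j \<in> S x"
    hence j: "j \<in> {1..n}" "xs j \<le> x" by (auto simp: S_def)
    show "j \<in> {1..<i}"
    proof (rule ccontr)
      assume "j \<notin> {1..<i}"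
      hence "i \<le> j" using j by auto
      hence "i \<le> n" "xs i \<le> xs j" using j xs_le[of i j] by auto
      thus False using B j by auto
    qed
  next
    fix j assume "j \<in> {1..<i}"
    hence "xs j \<le> xs (i - 1)" using assms xs_le[of j "i - 1"] by auto
    thus "j \<in> S x" using assms A \<open>j \<in> {1..<i}\<close> by (auto simp: S_def)
  qed
qed

lemma exists_intv:
  assumes "x \<in> {0..1}"
  shows "\<exists>i\<in>{1..n+1}. x \<in> intv n xs i"
proof -
  define P where "P j = (j \<in> {1..n+1} \<and> (j = n+1 \<or> x < xs j))" for j
  have Pn: "P (n+1)" by (simp add: P_def)
  define m where "m = (LEAST j. P j)"
  have Pm: "P m" using LeastI[of P, OF Pn] by (simp add: m_def)
  have notP: "j < m \<Longrightarrow> \<not> P j" for j using not_less_Least m_def by blast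
  have low: "xs (m - 1) \<le> x"
  proof (cases "m - 1 = 0")
    case True thus ?thesis using x0 assms by simp
  next
    case False
    hence "\<not> P (m - 1)" using notP by simp
    moreover have "m - 1 \<in> {1..n+1}" "m - 1 \<noteq> n + 1" using Pm False by (auto simp: P_def)
    ultimately show ?thesis by (auto simp: P_def)
  qed
  have "m \<in> {1..n+1}" using Pm by (simp add: P_def)
  moreover have "x \<in> intv n xs m"
  proof (cases "m = n + 1")
    case True thus ?thesis using low assms by (simp add: intv_def)
  next
    case False thus ?thesis using low Pm by (simp add: intv_def P_def)
  qed
  ultimately show ?thesis by blast
qed

lemma idx:
  assumes "x \<in> {0..1}"
  shows "(THE i. i \<in> {1..n+1} \<and> x \<in> intv n xs i) = Suc (k x)"
    and "Suc (k x) \<in> {1..n+1}" and "x \<in> intv n xs (Suc (k x))"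
proof -
  obtain i where i: "i \<in> {1..n+1}" "x \<in> intv n xs i" using exists_intv[OF assms] by blast
  have ki: "Suc (k x) = i" using S_intv[OF i] i by (simp add: k_def)
  show "Suc (k x) \<in> {1..n+1}" "x \<in> intv n xs (Suc (k x))" using i ki by auto
  show "(THE i. i \<in> {1..n+1} \<and> x \<in> intv n xs i) = Suc (k x)"
  proof (rule the_equality)
    show "Suc (k x) \<in> {1..n+1} \<and> x \<in> intv n xs (Suc (k x))" using i ki by auto
  next
    fix j assume "j \<in> {1..n+1} \<and> x \<in> intv n xs j"
    thus "j = Suc (k x)" using S_intv[of j x] by (auto simp: k_def)
  qed
qed

lemma sum_pw: "(\<Sum>j=1..<Suc m. pw n j) = (if m = 0 then 0 else (real m - 1) / n)"
  by (induction m) (auto simp: pw_def diff_divide_distrib)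

lemma sum_dl: "(\<Sum>j=1..<Suc m. dl n j) =
   (if m = 0 then 0 else (real n - 1) / (real n)^2 - (real m - 1) / (real n)^2)"
  by (induction m) (auto simp: dl_def diff_divide_distrib)

lemma Tp_eq:
  assumes "x \<in> {0..1}"
  shows "Tp n xs u x = g (k x) (u x)"
proof -
  have "Tp n xs u x = pw n (Suc (k x)) * u x + (\<Sum>j=1..<Suc (k x). pw n j) + (\<Sum>j=1..<Suc (k x). dl n j)"
    using assms idx(1)[OF assms] by (simp add: Tp_def Let_def)
  also have "\<dots> = pw n (Suc (k x)) * u x + (if k x = 0 then 0 else (real (k x) - 1) / n)
      + (if k x = 0 then 0 else (real n - 1) / (real n)^2 - (real (k x) - 1) / (real n)^2)"
    by (simp only: sum_pw sum_dl)
  also have "\<dots> = g (k x) (u x)"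
    using n2 by (simp add: g_def pw_def field_simps power2_eq_square)
  finally show ?thesis .
qed

lemma k_le: "k x \<le> n"
proof -
  have "S x \<subseteq> {1..n}" by (auto simp: S_def)
  thus ?thesis unfolding k_def using card_mono[of "{1..n}" "S x"] by simp
qed

lemma k_mono: "x \<le> y \<Longrightarrow> k x \<le> k y"
  unfolding k_def by (rule card_mono) (auto simp: S_def)

lemma k0: "k 0 = 0"
proof -
  have "\<not> xs j \<le> 0" if "j \<in> {1..n}" for j
    using xs_less[of 0 j] x0 that by simp
  hence "S 0 = {}" unfolding S_def by blast
  thus ?thesis by (simp add: k_def)
qed

lemma k1: "k 1 = n"
proof -
  have "xs j \<le> 1" if "j \<in> {1..n}" for j
    using xs_le[of j "n+1"] x1 that by simp
  hence "S 1 = {1..n}" unfolding S_def by blast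
  thus ?thesis by (simp add: k_def)
qed

lemma Fhat_eq: "Fhat n xs x = real (k x) / n"
  by (simp add: Fhat_def k_def S_def)

lemma g_mono_t: "t \<le> t' \<Longrightarrow> g m t \<le> g m t'"
  using n2 by (auto simp: g_def divide_right_mono)

lemma g_nonneg: "t \<ge> 0 \<Longrightarrow> m \<le> n \<Longrightarrow> g m t \<ge> 0"
  using n2 by (auto simp: g_def)

lemma g_mono_m: assumes "t \<ge> 0" "m \<le> m'" "m' \<le> n" shows "g m t \<le> g m' t"
proof (cases "m = 0")
  case True thus ?thesis using g_nonneg assms by (simp add: g_def)
next
  case False
  have nn: "real n > 0" using n2 by simp
  have "real m * (real n - 1) \<le> real m' * (real n - 1)"
    using assms n2 by (intro mult_right_mono) auto
  hence "((real m - 1) * n + (real n - real m)) / (real n)^2 \<le> ((real m' - 1) * n + (real n - real m')) / (real n)^2"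
    by (intro divide_right_mono) (auto simp: algebra_simps)
  hence "(real m - 1) / n + (real n - real m) / (real n)^2 \<le> (real m' - 1) / n + (real n - real m') / (real n)^2"
    using nn by (simp add: add_divide_distrib power2_eq_square)
  thus ?thesis using False assms by (simp add: g_def)
qed

lemma g_n1: "g n 1 = 1"
  using n2 by (simp add: g_def field_simps)

lemma g_fix: "m \<le> n \<Longrightarrow> g m (real m / n) = real m / n"
  using n2 by (simp add: g_def field_simps power2_eq_square)

lemma g_contr: "\<bar>g m t - g m t'\<bar> \<le> \<bar>t - t'\<bar> / n"
  using n2 by (simp add: g_def diff_divide_distrib[symmetric] abs_divide)


lemma loc:
  assumes "x \<in> {0..<1}"
  shows "\<exists>b>x. \<forall>y. x \<le> y \<and> y < b \<longrightarrow> y \<in> {0..1} \<and> k y = k x"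
proof -
  have x01: "x \<in> {0..1}" using assms by simp
  have I1: "Suc (k x) \<in> {1..n+1}" by (rule idx(2)[OF x01])
  have I2: "x \<in> intv n xs (Suc (k x))" by (rule idx(3)[OF x01])
  have x0: "0 \<le> x" "x < 1" using assms by simp_all
  show ?thesis
  proof (cases "Suc (k x) = n + 1")
    case True
    have "x \<in> {xs n..1}" using I2 unfolding True intv_def by simp
    hence xn: "xs n \<le> x" by simp
    have "\<forall>y. x \<le> y \<and> y < 1 \<longrightarrow> y \<in> {0..1} \<and> k y = k x"
    proof (intro allI impI)
      fix y assume y: "x \<le> y \<and> y < 1"
      have "y \<in> intv n xs (n+1)" unfolding intv_def using xn y by simp
      hence "S y = {1..<n+1}" by (intro S_intv) simp_all
      hence "k y = n" by (simp add: k_def)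
      moreover have "k x = n" using True by simp
      moreover have "y \<in> {0..1}" using y x0 by simp
      ultimately show "y \<in> {0..1} \<and> k y = k x" by simp
    qed
    thus ?thesis using x0 by blast
  next
    case False
    have "x \<in> {xs (Suc (k x) - 1)..<xs (Suc (k x))}" using I2 False unfolding intv_def by simp
    hence Ix: "xs (k x) \<le> x" "x < xs (Suc (k x))" by simp_all
    have "Suc (k x) \<le> n + 1" using I1 by simp
    hence b1: "xs (Suc (k x)) \<le> 1" using xs_le[of "Suc (k x)" "n+1"] x1 by simp
    have "\<forall>y. x \<le> y \<and> y < xs (Suc (k x)) \<longrightarrow> y \<in> {0..1} \<and> k y = k x"
    proof (intro allI impI)
      fix y assume y: "x \<le> y \<and> y < xs (Suc (k x))"
      have "y \<in> intv n xs (Suc (k x))" unfolding intv_def using Ix False y by simp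
      hence "S y = {1..<Suc (k x)}" using I1 by (intro S_intv)
      hence "k y = k x" by (simp add: k_def)
      moreover have "y \<in> {0..1}" using y x0 b1 by simp
      ultimately show "y \<in> {0..1} \<and> k y = k x" by simp
    qed
    thus ?thesis using Ix by blast
  qed
qed

lemma Fhat01: "x \<in> {0..1} \<Longrightarrow> Fhat n xs x \<in> {0..1}"
  using k_le[of x] n2 by (simp add: Fhat_eq)

lemma Tp_dist: assumes u: "u \<in> distfuns" shows "Tp n xs u \<in> distfuns"
proof -
  have uu: "mono_on {0..1} u \<and> (\<forall>x\<in>{0..<1}. continuous (at_right x) u)
                 \<and> (\<forall>x\<in>{0..1}. u x \<in> {0..1}) \<and> u 0 = 0 \<and> u 1 = 1"
    using u unfolding distfuns_def by (rule CollectD)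
  have um: "mono_on {0..1} u" using uu by blast
  have urc: "\<And>x. x \<in> {0..<1} \<Longrightarrow> continuous (at_right x) u" using uu by blast
  have u01: "\<And>x. x \<in> {0..1} \<Longrightarrow> u x \<in> {0..1}" using uu by blast
  have u1: "u 1 = 1" using uu by blast
  have mono: "mono_on {0..1} (Tp n xs u)"
  proof (rule mono_onI)
    fix x y :: real assume xy: "x \<in> {0..1}" "y \<in> {0..1}" "x \<le> y"
    have "u x \<le> u y" using um xy by (rule mono_onD)
    hence "g (k x) (u x) \<le> g (k x) (u y)" by (rule g_mono_t)
    also have "\<dots> \<le> g (k y) (u y)"
    proof (rule g_mono_m)
      show "0 \<le> u y" using u01[OF xy(2)] by simp
      show "k x \<le> k y" using k_mono[OF xy(3)] .
      show "k y \<le> n" by (rule k_le)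
    qed
    finally show "Tp n xs u x \<le> Tp n xs u y" by (simp only: Tp_eq[OF xy(1)] Tp_eq[OF xy(2)])
  qed
  have vals: "Tp n xs u x \<in> {0..1}" if x: "x \<in> {0..1}" for x
  proof -
    have ux: "0 \<le> u x" "u x \<le> 1" using u01[OF x] by auto
    have "0 \<le> g (k x) (u x)" using g_nonneg[OF ux(1) k_le] .
    moreover have "g (k x) (u x) \<le> g (k x) 1" using g_mono_t[OF ux(2)] .
    moreover have "g (k x) 1 \<le> g n 1" using g_mono_m[of 1 "k x" n] k_le by simp
    ultimately show ?thesis using g_n1 by (simp only: Tp_eq[OF x] atLeastAtMost_iff) simp
  qed
  have rc: "continuous (at_right x) (Tp n xs u)" if x: "x \<in> {0..<1}" for x
  proof -
    obtain b where b: "b > x" "\<And>y. x \<le> y \<and> y < b \<Longrightarrow> y \<in> {0..1} \<and> k y = k x"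
      using loc[OF x] by blast
    have ev: "eventually (\<lambda>y. g (k x) (u y) = Tp n xs u y) (at_right x)"
      unfolding eventually_at_right_field
    proof (intro exI[of _ b] conjI allI impI)
      show "b > x" by (rule b(1))
      fix y assume "x < y" "y < b"
      then have "y \<in> {0..1}" "k y = k x" using b(2)[of y] by auto
      thus "g (k x) (u y) = Tp n xs u y" using Tp_eq[of y u] by simp
    qed
    have lim: "(u \<longlongrightarrow> u x) (at_right x)" using urc[OF x] by (simp add: continuous_within)
    have "((\<lambda>y. g (k x) (u y)) \<longlongrightarrow> g (k x) (u x)) (at_right x)"
    proof (cases "k x = 0")
      case True thus ?thesis by (simp add: g_def)
    next
      case False
      have "((\<lambda>y. u y / n + (real (k x) - 1) / n + (real n - real (k x)) / (real n)^2) \<longlongrightarrow>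
            u x / n + (real (k x) - 1) / n + (real n - real (k x)) / (real n)^2) (at_right x)"
        by (intro tendsto_intros lim) (use n2 in simp)
      thus ?thesis using False by (simp add: g_def)
    qed
    hence "(Tp n xs u \<longlongrightarrow> g (k x) (u x)) (at_right x)" using ev by (rule Lim_transform_eventually)
    moreover have "g (k x) (u x) = Tp n xs u x" using Tp_eq x by simp
    ultimately show ?thesis by (simp add: continuous_within)
  qed
  have "Tp n xs u 0 = g (k 0) (u 0)" by (rule Tp_eq) simp
  hence T0: "Tp n xs u 0 = 0" unfolding k0 by (simp add: g_def)
  have "Tp n xs u 1 = g (k 1) (u 1)" by (rule Tp_eq) simp
  hence T1: "Tp n xs u 1 = 1" unfolding k1 u1 g_n1 .
  show ?thesis unfolding distfuns_def mem_Collect_eq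
    by (intro conjI ballI mono rc vals T0 T1)
qed

lemma fixp: assumes x: "x \<in> {0..1}" shows "Tp n xs (Fhat n xs) x = Fhat n xs x"
proof -
  have "Tp n xs (Fhat n xs) x = g (k x) (Fhat n xs x)" by (rule Tp_eq[OF x])
  also have "\<dots> = g (k x) (real (k x) / n)" by (simp only: Fhat_eq)
  also have "\<dots> = real (k x) / n" by (rule g_fix[OF k_le])
  finally show ?thesis by (simp only: Fhat_eq)
qed

lemma iter_step:
  assumes x: "x \<in> {0..1}"
  shows "\<bar>Tp n xs v x - Fhat n xs x\<bar> \<le> \<bar>v x - Fhat n xs x\<bar> / n"
proof -
  have 1: "Tp n xs v x = g (k x) (v x)" by (rule Tp_eq[OF x])
  have 2: "Fhat n xs x = g (k x) (Fhat n xs x)"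
    using fixp[OF x] Tp_eq[OF x, of "Fhat n xs"] by linarith
  have 3: "Tp n xs v x - Fhat n xs x = g (k x) (v x) - g (k x) (Fhat n xs x)"
    using 1 2 by linarith
  have "\<bar>Tp n xs v x - Fhat n xs x\<bar> = \<bar>g (k x) (v x) - g (k x) (Fhat n xs x)\<bar>"
    by (simp only: 3)
  also have "\<dots> \<le> \<bar>v x - Fhat n xs x\<bar> / n" by (rule g_contr)
  finally show ?thesis .
qed

lemma iter_bound:
  assumes u: "u \<in> distfuns"
  shows "\<forall>x\<in>{0..1}. \<bar>(Tp n xs ^^ s) u x - Fhat n xs x\<bar> \<le> (1 / real n) ^ s"
proof (induction s)
  case 0
  show ?case
  proof
    fix x :: real assume x: "x \<in> {0..1}"
    have uu: "mono_on {0..1} u \<and> (\<forall>x\<in>{0..<1}. continuous (at_right x) u)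
                 \<and> (\<forall>x\<in>{0..1}. u x \<in> {0..1}) \<and> u 0 = 0 \<and> u 1 = 1"
      using u unfolding distfuns_def by (rule CollectD)
    have "u x \<in> {0..1}" using uu x by blast
    hence a: "0 \<le> u x" "u x \<le> 1" by simp_all
    have b: "0 \<le> Fhat n xs x" "Fhat n xs x \<le> 1" using Fhat01[OF x] by simp_all
    have "\<bar>u x - Fhat n xs x\<bar> \<le> 1" using a b by linarith
    thus "\<bar>(Tp n xs ^^ 0) u x - Fhat n xs x\<bar> \<le> (1 / real n) ^ 0" by simp
  qed
next
  case (Suc s)
  show ?case
  proof
    fix x :: real assume x: "x \<in> {0..1}"
    let ?v = "(Tp n xs ^^ s) u"
    have e: "(Tp n xs ^^ Suc s) u = Tp n xs ?v" by simp
    have "\<bar>(Tp n xs ^^ Suc s) u x - Fhat n xs x\<bar> \<le> \<bar>?v x - Fhat n xs x\<bar> / n"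
      unfolding e by (rule iter_step[OF x])
    also have "\<dots> \<le> (1 / real n) ^ s / n" using Suc x by (intro divide_right_mono) auto
    also have "\<dots> = (1 / real n) ^ Suc s" by (simp add: field_simps)
    finally show "\<bar>(Tp n xs ^^ Suc s) u x - Fhat n xs x\<bar> \<le> (1 / real n) ^ Suc s" .
  qed
qed

lemma conv:
  assumes u: "u \<in> distfuns"
  shows "(\<lambda>s. dsup ((Tp n xs ^^ s) u) (Fhat n xs)) \<longlonglongrightarrow> 0"
proof (rule Lim_null_comparison)
  have "norm (1 / real n) < 1" using n2 by simp
  thus "(\<lambda>s. (1 / real n) ^ s) \<longlonglongrightarrow> 0" by (rule LIMSEQ_power_zero)
  show "\<forall>\<^sub>F s in sequentially. norm (dsup ((Tp n xs ^^ s) u) (Fhat n xs)) \<le> (1 / real n) ^ s"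
  proof (rule always_eventually, rule allI)
    fix s
    note B = iter_bound[OF u, of s]
    have B': "\<And>x. x \<in> {0..1} \<Longrightarrow> \<bar>(Tp n xs ^^ s) u x - Fhat n xs x\<bar> \<le> (1 / real n) ^ s"
      using B by blast
    have bdd: "bdd_above ((\<lambda>x. \<bar>(Tp n xs ^^ s) u x - Fhat n xs x\<bar>) ` {0..1})"
      by (rule bdd_aboveI2) (rule B')
    have up: "dsup ((Tp n xs ^^ s) u) (Fhat n xs) \<le> (1 / real n) ^ s"
      unfolding dsup_def by (rule cSUP_least) (simp, rule B')
    have lo: "0 \<le> dsup ((Tp n xs ^^ s) u) (Fhat n xs)"
      unfolding dsup_def by (rule cSUP_upper2[OF bdd, of 0]) simp_all
    show "norm (dsup ((Tp n xs ^^ s) u) (Fhat n xs)) \<le> (1 / real n) ^ s" using up lo by simp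
  qed
qed

end

theorem mainTheorem8:
  fixes n :: nat and xs :: "nat \<Rightarrow> real"
  assumes "n \<ge> 2"
    and "xs 0 = 0" and "xs (n + 1) = 1"
    and "strict_mono_on {0..n+1} xs"
  shows "(\<forall>u\<in>distfuns. Tp n xs u \<in> distfuns)
       \<and> (\<forall>x\<in>{0..1}. Tp n xs (Fhat n xs) x = Fhat n xs x)
       \<and> (\<forall>u\<in>distfuns. (\<lambda>s. dsup ((Tp n xs ^^ s) u) (Fhat n xs)) \<longlonglongrightarrow> 0)"
proof -
  interpret setupT n xs using assms by unfold_locales
  show ?thesis using Tp_dist fixp conv by blast
qed

end
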